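(* Let $G=(V,E)$ be a graph, $\mathcal{F}$ a monotone feature, and $f,g:E\to\mathbb{R}$ two filtering functions with $\sup_{e\in E}|f(e)-g(e)|\le h$ for some real $h>0$. Let $X\subseteq V\cup E$ have $\mathcal{F}$-interval $[u_1,v_1)$ in $(G,f)$ with $u_1+2h<v_1<+\infty$. Then $X$ has a non-empty $\mathcal{F}$-interval $[u_2,v_2)$ in $(G,g)$, and $|u_1-u_2|\le h$, $|v_1-v_2|\le h$.
   Context: Graphs are finite simple undirected graphs. For a filtering function $f:E\to\mathbb{R}$ and $u\in\mathbb{R}$, $G_{f,u}=(V_{f,u},E_{f,u})$ is the subgraph induced by the edge set $f^{-1}((-\infty,u])$ (vertices: endpoints of these edges); similarly $G_{g,u}$. Only subgraphs induced by edge sets are considered. A feature $\mathcal{F}$ assigns to every graph $H=(V_H,E_H)$ a function $2^{V_H\cup E_H}\to\{true,false\}$. It is monotone if (i) for any graphs $G'=(V',E')\subset G''$ and any $X\subseteq V'\cup E'$, $\mathcal{F}(X)=true$ in $G''$ implies $\mathcal{F}(X)=true$ in $G'$; and (ii) in any graph, for $Y\subset X$, $\mathcal{F}(X)=true$ implies $\mathcal{F}(Y)=true$. For monotone $\mathcal{F}$ and $X\subseteq V\cup E$ such that $\mathcal{F}(X)=true$ in $G_{f,u}$ for some $u$, the $\mathcal{F}$-interval of $X$ in $(G,f)$ is $[u_1,v_1)$, where $u_1$ is the lowest $u$ with $X\subseteq V_{f,u}\cup E_{f,u}$ and $v_1$ is the lowest $v\ge u_1$ with $\mathcal{F}(X)=false$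 in $G_{f,v}$, or $+\infty$ if there is none; it is the widest interval on which $\mathcal{F}(X)=true$ in $G_{f,w}$. The $\mathcal{F}$-interval in $(G,g)$ is defined analogously. *)

theory Defs
  imports "HOL-Library.Extended_Real"
begin

text \<open>Elements of V \<union> E are represented in the sum type:
  Inl v for a vertex v, Inr e for an edge e.\<close>

type_synonym 'a graph = "'a set \<times> 'a set set"
type_synonym 'a elem = "'a + 'a set"

definition is_graph :: "'a graph \<Rightarrow> bool" where
  "is_graph G \<longleftrightarrow> finite (fst G) \<and>
     (\<forall>e\<in>snd G. e \<subseteq> fst G \<and> card e = 2)"

definition elems :: "'a graph \<Rightarrow> 'a elem set" where
  "elems G = Inl ` fst G \<union> Inr ` snd G"

definition subgraph :: "'a graph \<Rightarrow> 'a graph \<Rightarrow> bool" where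
  "subgraph G' G'' \<longleftrightarrow> fst G' \<subseteq> fst G'' \<and> snd G' \<subseteq> snd G''"

definition edge_induced :: "'a set set \<Rightarrow> 'a graph" where
  "edge_induced F = (\<Union>F, F)"

definition sublevel :: "'a graph \<Rightarrow> ('a set \<Rightarrow> real) \<Rightarrow> real \<Rightarrow> 'a graph" where
  "sublevel G f u = edge_induced {e \<in> snd G. f e \<le> u}"

type_synonym 'a feature = "'a graph \<Rightarrow> 'a elem set \<Rightarrow> bool"

definition monotone_feature :: "'a feature \<Rightarrow> bool" where
  "monotone_feature \<F> \<longleftrightarrow>
     (\<forall>G' G'' X. is_graph G' \<and> is_graph G'' \<and> subgraph G' G'' \<and> G' \<noteq> G'' \<and>
        X \<subseteq> elems G' \<and> \<F> G'' X \<longrightarrow> \<F> G' X) \<and>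
     (\<forall>H X Y. is_graph H \<and> X \<subseteq> elems H \<and> Y \<subset> X \<and> \<F> H X \<longrightarrow> \<F> H Y)"

definition F_interval ::
  "'a feature \<Rightarrow> 'a graph \<Rightarrow> ('a set \<Rightarrow> real) \<Rightarrow> 'a elem set \<Rightarrow> real \<Rightarrow> ereal \<Rightarrow> bool" where
  "F_interval \<F> G f X u v \<longleftrightarrow>
     (\<exists>w. X \<subseteq> elems (sublevel G f w) \<and> \<F> (sublevel G f w) X) \<and>
     X \<subseteq> elems (sublevel G f u) \<and> (\<forall>w. X \<subseteq> elems (sublevel G f w) \<longrightarrow> u \<le> w) \<and>
     ((v = \<infinity> \<and> (\<forall>w\<ge>u. \<F> (sublevel G f w) X)) \<or>
      (\<exists>v'. v = ereal v' \<and> v' \<ge> u \<and> \<not> \<F> (sublevel G f v') X \<and>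
        (\<forall>w\<ge>u. \<not> \<F> (sublevel G f w) X \<longrightarrow> v' \<le> w)))"

end

theory Submission
  imports Defs
begin

lemma is_graph_ei:
  assumes "is_graph G" "E1 \<subseteq> snd G"
  shows "is_graph (edge_induced E1)"
proof -
  have "\<Union>E1 \<subseteq> fst G" using assms unfolding is_graph_def by blast
  hence "finite (\<Union>E1)" using assms unfolding is_graph_def by (meson finite_subset)
  thus ?thesis using assms unfolding is_graph_def edge_induced_def by auto
qed

lemma mono_step:
  assumes "is_graph G" "monotone_feature F" "E1 \<subseteq> E2" "E2 \<subseteq> snd G"
    "X \<subseteq> elems (edge_induced E1)" "F (edge_induced E2) X"
  shows "F (edge_induced E1) X"
proof (cases "E1 = E2")
  case True thus ?thesis using assms by simp
next
  case False
  hence ne: "edge_induced E1 \<noteq> edge_induced E2" unfolding edge_induced_def by simp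
  have sg: "subgraph (edge_induced E1) (edge_induced E2)"
    using assms(3) unfolding subgraph_def edge_induced_def by auto
  have "is_graph (edge_induced E1)" "is_graph (edge_induced E2)"
    using is_graph_ei assms by (blast intro: order_trans)+
  thus ?thesis using assms(2,5,6) ne sg unfolding monotone_feature_def by blast
qed

lemma sub_shift:
  fixes f g :: "'a set \<Rightarrow> real"
  assumes "\<forall>e\<in>snd G. \<bar>f e - g e\<bar> \<le> h"
  shows "{e \<in> snd G. f e \<le> w} \<subseteq> {e \<in> snd G. g e \<le> w + h}"
proof
  fix e assume "e \<in> {e \<in> snd G. f e \<le> w}"
  moreover hence "\<bar>f e - g e\<bar> \<le> h" using assms by blast
  ultimately show "e \<in> {e \<in> snd G. g e \<le> w + h}" by (auto simp: abs_le_iff)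
qed

lemma min_exists:
  fixes g :: "'a set \<Rightarrow> real"
  assumes fin: "finite (snd G)" and w0: "P (sublevel G g w0)" and nP: "\<not> P (edge_induced {})"
  shows "\<exists>m. P (sublevel G g m) \<and> (\<forall>w. P (sublevel G g w) \<longrightarrow> m \<le> w)"
proof -
  have key: "\<exists>w'. w' \<le> w \<and> w' \<in> g ` snd G \<and> sublevel G g w' = sublevel G g w"
    if "P (sublevel G g w)" for w
  proof -
    let ?E = "{e \<in> snd G. g e \<le> w}"
    have ne: "?E \<noteq> {}"
    proof
      assume "?E = {}"
      hence "sublevel G g w = edge_induced {}" unfolding sublevel_def by argo
      thus False using that nP by simp
    qed
    have fE: "finite ?E" using fin by simp
    define w' where "w' = Max (g ` ?E)"
    have "w' \<in> g ` ?E" unfolding w'_def using ne fE by (intro Max_in) auto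
    hence 1: "w' \<le> w" "w' \<in> g ` snd G" by auto
    have "{e \<in> snd G. g e \<le> w'} = ?E"
    proof
      show "{e \<in> snd G. g e \<le> w'} \<subseteq> ?E" using 1 by auto
      show "?E \<subseteq> {e \<in> snd G. g e \<le> w'}" unfolding w'_def using fE by auto
    qed
    thus ?thesis using 1 unfolding sublevel_def by metis
  qed
  let ?A = "{x \<in> g ` snd G. P (sublevel G g x)}"
  have fA: "finite ?A" using fin by simp
  obtain w1 where "w1 \<in> ?A" using key[OF w0] w0 by force
  hence neA: "?A \<noteq> {}" by blast
  define m where "m = Min ?A"
  have mA: "m \<in> ?A" unfolding m_def using fA neA by (rule Min_in)
  moreover have "\<forall>w. P (sublevel G g w) \<longrightarrow> m \<le> w"
  proof (intro allI impI)
    fix w assume "P (sublevel G g w)"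
    then obtain w' where "w' \<le> w" "w' \<in> g ` snd G" "sublevel G g w' = sublevel G g w"
      using key by blast
    hence "w' \<in> ?A" using \<open>P (sublevel G g w)\<close> by simp
    hence "m \<le> w'" unfolding m_def using fA by simp
    thus "m \<le> w" using \<open>w' \<le> w\<close> by simp
  qed
  ultimately show ?thesis by blast
qed

theorem lemma3:
  fixes G :: "'a graph" and \<F> :: "'a feature" and f g :: "'a set \<Rightarrow> real"
    and h u1 v1 :: real and X :: "'a elem set"
  assumes "is_graph G"
    and "monotone_feature \<F>"
    and "h > 0"
    and "\<forall>e\<in>snd G. \<bar>f e - g e\<bar> \<le> h"
    and "X \<subseteq> elems G"
    and "F_interval \<F> G f X u1 (ereal v1)"
    and "u1 + 2 * h < v1"
  shows "\<exists>u2 v2. F_interval \<F> G g X u2 (ereal v2) \<and> u2 < v2 \<and>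
           \<bar>u1 - u2\<bar> \<le> h \<and> \<bar>v1 - v2\<bar> \<le> h"
proof -
  note G = assms(1) and M = assms(2) and D = assms(4)
  have finE: "finite (snd G)"
  proof -
    have "snd G \<subseteq> Pow (fst G)" using G unfolding is_graph_def by auto
    thus ?thesis using G unfolding is_graph_def by (meson finite_Pow_iff finite_subset)
  qed
  have D': "\<forall>e\<in>snd G. \<bar>g e - f e\<bar> \<le> h" using D by auto
  have u1in: "X \<subseteq> elems (sublevel G f u1)"
    and u1min: "\<forall>w. X \<subseteq> elems (sublevel G f w) \<longrightarrow> u1 \<le> w"
    and v1ge: "v1 \<ge> u1" and v1F: "\<not> \<F> (sublevel G f v1) X"
    and v1min: "\<forall>w\<ge>u1. \<not> \<F> (sublevel G f w) X \<longrightarrow> v1 \<le> w"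
    using assms(6) unfolding F_interval_def by auto
  have Xne: "X \<noteq> {}" using u1min by (metis empty_subsetI lt_ex not_le)
  have elemsmono: "elems (edge_induced A) \<subseteq> elems (edge_induced B)" if "A \<subseteq> B" for A B
    using that unfolding elems_def edge_induced_def by auto
  have fg: "elems (sublevel G f w) \<subseteq> elems (sublevel G g (w + h))" for w
    unfolding sublevel_def using elemsmono[OF sub_shift[OF D]] .
  have gf: "elems (sublevel G g w) \<subseteq> elems (sublevel G f (w + h))" for w
    unfolding sublevel_def using elemsmono[OF sub_shift[OF D']] .
  have e0: "elems (edge_induced {}) = {}" unfolding elems_def edge_induced_def by simp
  obtain u2 where u2in: "X \<subseteq> elems (sublevel G g u2)"
    and u2min: "\<forall>w. X \<subseteq> elems (sublevel G g w) \<longrightarrow> u2 \<le> w"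
    using min_exists[OF finE, of "\<lambda>H. X \<subseteq> elems H" g "u1 + h"] u1in fg[of u1] Xne e0 by blast
  have "u1 \<le> u2 + h" using u1min gf[of u2] u2in by blast
  moreover have "u2 \<le> u1 + h" using u2min fg[of u1] u1in by blast
  ultimately have u12: "\<bar>u1 - u2\<bar> \<le> h" by linarith
  have upg: "X \<subseteq> elems (sublevel G g w)" if "w \<ge> u2" for w
    using u2in elemsmono[of "{e \<in> snd G. g e \<le> u2}" "{e \<in> snd G. g e \<le> w}"] that
    unfolding sublevel_def by force
  have monoS: "\<F> (sublevel G g w) X" if "u2 \<le> w" "w \<le> w'" "\<F> (sublevel G g w') X" for w w'
    using mono_step[OF G M, of "{e \<in> snd G. g e \<le> w}" "{e \<in> snd G. g e \<le> w'}" X]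
      that upg[OF that(1)] unfolding sublevel_def by force
  have "\<not> \<F> (sublevel G g (v1 + h)) X"
  proof
    assume "\<F> (sublevel G g (v1 + h)) X"
    hence "\<F> (sublevel G f v1) X"
      using mono_step[OF G M sub_shift[OF D, of v1], where X=X] u1in v1ge
        elemsmono[of "{e \<in> snd G. f e \<le> u1}" "{e \<in> snd G. f e \<le> v1}"]
      unfolding sublevel_def by force
    thus False using v1F by simp
  qed
  moreover have "u2 \<le> v1 + h" using \<open>u2 \<le> u1 + h\<close> v1ge by simp
  ultimately obtain v2 where v2P: "X \<subseteq> elems (sublevel G g v2) \<and> \<not> \<F> (sublevel G g v2) X"
    and v2min: "\<forall>w. X \<subseteq> elems (sublevel G g w) \<and> \<not> \<F> (sublevel G g w) X \<longrightarrow> v2 \<le> w"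
    using min_exists[OF finE, of "\<lambda>H. X \<subseteq> elems H \<and> \<not> \<F> H X" g "v1 + h"] upg Xne e0
    by blast
  have v2ge: "u2 \<le> v2" using v2P u2min by blast
  have v2a: "v2 \<le> v1 + h" using v2min upg \<open>\<not> \<F> (sublevel G g (v1 + h)) X\<close> \<open>u2 \<le> v1 + h\<close>
    by blast
  have "\<not> \<F> (sublevel G f (v2 + h)) X"
  proof
    assume "\<F> (sublevel G f (v2 + h)) X"
    hence "\<F> (sublevel G g v2) X"
      using mono_step[OF G M sub_shift[OF D', of v2], where X=X] v2P
      unfolding sublevel_def by force
    thus False using v2P by simp
  qed
  hence "v1 \<le> v2 + h" using v1min u12 v2ge by force
  hence v12: "\<bar>v1 - v2\<bar> \<le> h" using v2a by linarith
  have lt: "u2 < v2" using \<open>v1 \<le> v2 + h\<close> \<open>u2 \<le> u1 + h\<close> assms(7) by linarith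
  have Fu2: "\<F> (sublevel G g u2) X" using v2min u2in lt by force
  have "F_interval \<F> G g X u2 (ereal v2)"
    unfolding F_interval_def
    using u2in Fu2 u2min v2ge v2P v2min upg by blast
  thus ?thesis using lt u12 v12 by blast
qed

end
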